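(* Let $\alpha\in(1,\infty)$ and suppose $g$ satisfies Assumption 1 with this $\alpha$ and with a supergradient $g'(x^* )>0$, and also satisfies Assumption 2 with the same $\alpha$. Then in the asymptotic regime there exist constants $0<K_1\le K_2$ and $c_0$ independent of $c$ such that for all $c\ge c_0$ there is a two-price policy $\mathbf x^{\mathrm{TP}}$ with $$K_1c^{1/(\alpha+1)}\le\lambda g(x^* )-\sup_{\mathbf x\in[0,1]^c}\mathcal R(\mathbf x)\le\lambda g(x^* )-\mathcal R(\mathbf x^{\mathrm{TP}})\le K_2\,c^{1/(\alpha+1)}(\log c)^2,$$ i.e. the optimal performance loss $\tilde\Theta(c^{1/(\alpha+1)})$ among stock-dependent policies is attained (up to logarithmic factors) by a two-price policy.
   Context: Setting. Fix $c\in\mathbb N$ (number of identical units of a single reusable resource), an arrival rate $\lambda>0$ and a mean usage duration $d>0$, with $x^*:=c/(\lambda d)\in(0,1)$. Let $g:[0,1]\to\mathbb R$ be concave, non-decreasing, with $g(0)=0$ (the reward function). A stock-dependent policy is a vector $\mathbf x=(x_1,\dots,x_c)\in[0,1]^c$, where $x_j$ is the admission probability used when exactly $j$ units are available (the admission probability is $0$ when no unit is available). Its steady-state distribution is the unique probability vector $\pi=(\pi_0,\dots,\pi_c)$ satisfying $\pi_j\lambda x_j=\pi_{j-1}(c-j+1)/d$ for all $j\in\{1,\dots,c\}$, and its long-run average reward is $\mathcal R(\mathbf x)=\sum_{j=1}^c\pi_j\lambda g(x_j)$. A two-price policy with parameters $x_L,x_H\in[0,1]$ and $\tau\in\{1,\dots,c\}$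 sets $x_j=x_L$ for $1\le j\le\tau$ and $x_j=x_H$ for $\tau<j\le c$. Asymptotic regime: $x^*\in(0,1)$, $d$ and $g$ are fixed, $c\to\infty$ and $\lambda=c/(x^*d)$. Assumption 1: there exist $0<\varepsilon<\min\{x^*,1-x^*\}$, $\alpha\in[1,\infty]$, $k_1\ge0$ and a supergradient $g'(x^* )\ge0$ of $g$ at $x^*$ such that $g(x)\ge g(x^* )+g'(x^* )(x-x^* )-k_1|x-x^*|^\alpha$ for all $x\in[x^*-\varepsilon,x^*+\varepsilon]$. Assumption 2: there exist $0<\varepsilon<\min\{x^*,1-x^*\}$, $\alpha\in[1,\infty]$, $k_2>0$ and a supergradient $g'(x^* )\ge0$ of $g$ at $x^*$ such that $g(x)\le g(x^* )+g'(x^* )(x-x^* )-k_2|x-x^*|^\alpha$ for all $x\in[x^*-\varepsilon,x^*+\varepsilon]$. *)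

theory Defs
  imports "HOL-Analysis.Analysis"
begin

text \<open>A stock-dependent policy for c units: x j is the admission probability
  when exactly j units are available, j = 1..c (values outside 1..c are irrelevant).\<close>
definition policy :: "nat \<Rightarrow> (nat \<Rightarrow> real) \<Rightarrow> bool" where
  "policy c x \<longleftrightarrow> (\<forall>j\<in>{1..c}. 0 \<le> x j \<and> x j \<le> 1)"

definition is_steady_state :: "nat \<Rightarrow> real \<Rightarrow> real \<Rightarrow> (nat \<Rightarrow> real) \<Rightarrow> (nat \<Rightarrow> real) \<Rightarrow> bool" where
  "is_steady_state c lam d x p \<longleftrightarrow>
     (\<forall>j\<le>c. 0 \<le> p j) \<and> (\<Sum>j\<le>c. p j) = 1 \<and> (\<forall>j>c. p j = 0) \<and>
     (\<forall>j\<in>{1..c}. p j * lam * x j = p (j - 1) * (real c - real j + 1) / d)"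

definition steady_state :: "nat \<Rightarrow> real \<Rightarrow> real \<Rightarrow> (nat \<Rightarrow> real) \<Rightarrow> (nat \<Rightarrow> real)" where
  "steady_state c lam d x = (THE p. is_steady_state c lam d x p)"

definition avg_reward :: "nat \<Rightarrow> real \<Rightarrow> real \<Rightarrow> (real \<Rightarrow> real) \<Rightarrow> (nat \<Rightarrow> real) \<Rightarrow> real" where
  "avg_reward c lam d g x = (\<Sum>j=1..c. steady_state c lam d x j * lam * g (x j))"

definition two_price_policy :: "nat \<Rightarrow> (nat \<Rightarrow> real) \<Rightarrow> bool" where
  "two_price_policy c x \<longleftrightarrow>
     (\<exists>xL xH \<tau>. 0 \<le> xL \<and> xL \<le> 1 \<and> 0 \<le> xH \<and> xH \<le> 1 \<and> \<tau> \<in> {1..c} \<and>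
        (\<forall>j\<in>{1..c}. x j = (if j \<le> \<tau> then xL else xH)))"

definition supergradient :: "(real \<Rightarrow> real) \<Rightarrow> real \<Rightarrow> real \<Rightarrow> bool" where
  "supergradient g x0 s \<longleftrightarrow> (\<forall>y\<in>{0..1}. g y \<le> g x0 + s * (y - x0))"

definition assumption1 :: "(real \<Rightarrow> real) \<Rightarrow> real \<Rightarrow> real \<Rightarrow> real \<Rightarrow> bool" where
  "assumption1 g xs \<alpha> s \<longleftrightarrow> supergradient g xs s \<and> 0 \<le> s \<and>
     (\<exists>\<epsilon> k1. 0 < \<epsilon> \<and> \<epsilon> < min xs (1 - xs) \<and> 0 \<le> k1 \<and>
        (\<forall>x\<in>{xs - \<epsilon>..xs + \<epsilon>}. g x \<ge> g xs + s * (x - xs) - k1 * \<bar>x - xs\<bar> powr \<alpha>))"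

definition assumption2 :: "(real \<Rightarrow> real) \<Rightarrow> real \<Rightarrow> real \<Rightarrow> real \<Rightarrow> bool" where
  "assumption2 g xs \<alpha> s \<longleftrightarrow> supergradient g xs s \<and> 0 \<le> s \<and>
     (\<exists>\<epsilon> k2. 0 < \<epsilon> \<and> \<epsilon> < min xs (1 - xs) \<and> 0 < k2 \<and>
        (\<forall>x\<in>{xs - \<epsilon>..xs + \<epsilon>}. g x \<le> g xs + s * (x - xs) - k2 * \<bar>x - xs\<bar> powr \<alpha>))"

end

theory Submission
  imports Defs
begin


lemma ss_char:
  fixes c :: nat and lam d :: real and x :: "nat \<Rightarrow> real"
  assumes lam: "0 < lam" and d: "0 < d" and pol: "policy c x"
  shows "\<exists>!p. is_steady_state c lam d x p"
proof -
  define Z where "Z = {j\<in>{1..c}. x j = 0}"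
  define m where "m = (if Z = {} then 0 else Max Z)"
  have finZ: "finite Z" unfolding Z_def by auto
  have mc: "m \<le> c" unfolding m_def using finZ by (auto simp: Z_def)
  have mx: "1 \<le> m \<Longrightarrow> x m = 0"
  proof -
    assume "1 \<le> m"
    then have "Z \<noteq> {}" unfolding m_def by (auto split: if_splits)
    then have "m \<in> Z" unfolding m_def using finZ Max_in by auto
    then show ?thesis unfolding Z_def by auto
  qed
  have xpos: "x j > 0" if "m < j" "j \<le> c" for j
  proof -
    have "x j \<ge> 0" using pol that unfolding policy_def by auto
    moreover have "x j \<noteq> 0"
    proof
      assume "x j = 0"
      then have "j \<in> Z" using that unfolding Z_def by auto
      then have "j \<le> m" unfolding m_def using finZ by auto
      then show False using that by auto
    qed
    ultimately show ?thesis by auto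
  qed
  define r where "r i = (real c - real i + 1) / (d * lam * x i)" for i
  define R where "R j = (\<Prod>i\<in>{Suc m..j}. r i)" for j
  have rpos: "r i > 0" if "m < i" "i \<le> c" for i
    unfolding r_def using xpos[OF that] lam d that by (auto intro!: divide_pos_pos)
  have Rpos: "R (m + k) > 0" if "m + k \<le> c" for k
    unfolding R_def using that by (auto intro!: prod_pos rpos)
  have Rm: "R m = 1" unfolding R_def by simp
  have RSuc: "R (Suc j) = r (Suc j) * R j" if "m \<le> j" for j
    unfolding R_def using that by (simp add: prod.nat_ivl_Suc')
  define w where "w j = (if m \<le> j \<and> j \<le> c then R j else 0)" for j
  define S where "S = (\<Sum>j\<le>c. w j)"
  have wnn: "w j \<ge> 0" for j
  proof (cases "m \<le> j \<and> j \<le> c")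
    case True
    then obtain k where "j = m + k" by (metis le_add_diff_inverse)
    then show ?thesis using True Rpos[of k] by (auto simp: w_def)
  qed (auto simp: w_def)
  have S1: "S \<ge> 1"
  proof -
    have "w m \<le> S" unfolding S_def using mc wnn by (intro member_le_sum) auto
    then show ?thesis using mc Rm by (simp add: w_def)
  qed
  define p where "p j = w j / S" for j
  have bal: "p j * lam * x j = p (j - 1) * (real c - real j + 1) / d" if "j \<in> {1..c}" for j
  proof -
    consider "j < m" | "j = m" | "m < j" by linarith
    then show ?thesis
    proof cases
      case 1 then show ?thesis by (auto simp: p_def w_def)
    next
      case 2 then show ?thesis using mx that by (auto simp: p_def w_def)
    next
      case 3
      define j' where "j' = j - 1"
      have j': "j = Suc j'" "m \<le> j'" using 3 unfolding j'_def by auto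
      have "x j > 0" using xpos 3 that by auto
      then have "w j = r j * w (j - 1)" using j' that RSuc[of j'] by (auto simp: w_def)
      then show ?thesis using \<open>x j > 0\<close> lam d S1 that
        by (simp add: p_def r_def field_simps)
    qed
  qed
  have ssp: "is_steady_state c lam d x p"
    unfolding is_steady_state_def
  proof (intro conjI allI impI ballI)
    show "0 \<le> p j" for j using wnn S1 by (simp add: p_def)
    show "(\<Sum>j\<le>c. p j) = 1" using S1 by (simp add: p_def S_def sum_divide_distrib[symmetric])
    show "p j = 0" if "c < j" for j using that by (simp add: p_def w_def)
  qed (rule bal)
  have uniq: "q = p" if q: "is_steady_state c lam d x q" for q
  proof -
    have qbal: "q j * lam * x j = q (j - 1) * (real c - real j + 1) / d" if "j \<in> {1..c}" for j
      using q that unfolding is_steady_state_def by auto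
    have qdown: "q (j - 1) = 0" if "1 \<le> j" "j \<le> c" "q j = 0" for j
      using qbal[of j] that d by auto
    have qbase: "q (m - 1) = 0" if "1 \<le> m"
      using qbal[of m] that mx mc d by auto
    have low: "\<forall>n. n < m \<longrightarrow> q (m - 1 - n) = 0"
    proof
      fix n show "n < m \<longrightarrow> q (m - 1 - n) = 0"
      proof (induction n)
        case 0 then show ?case using qbase by auto
      next
        case (Suc n)
        show ?case
        proof
          assume "Suc n < m"
          then have "q (m - 1 - n) = 0" using Suc by auto
          then have "q (m - 1 - n - 1) = 0" using qdown[of "m - 1 - n"] \<open>Suc n < m\<close> mc by auto
          then show "q (m - 1 - Suc n) = 0" by (simp add: diff_diff_add)
        qed
      qed
    qed
    have qlow: "q j = 0" if "j < m" for j
      using low[rule_format, of "m - 1 - j"] that by auto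
    have up: "m + k \<le> c \<longrightarrow> q (m + k) = q m * R (m + k)" for k
    proof (induction k)
      case 0 then show ?case using Rm by simp
    next
      case (Suc k)
      show ?case
      proof
        assume a: "m + Suc k \<le> c"
        have xp: "x (m + Suc k) > 0" using xpos a by auto
        have "q (m + Suc k) * lam * x (m + Suc k) = q (m + k) * (real c - real (m + Suc k) + 1) / d"
          using qbal[of "m + Suc k"] a by auto
        then have "q (m + Suc k) = q (m + k) * r (m + Suc k)"
          using xp lam d by (simp add: r_def field_simps)
        moreover have "R (m + Suc k) = r (m + Suc k) * R (m + k)" using RSuc[of "m + k"] by simp
        ultimately show "q (m + Suc k) = q m * R (m + Suc k)" using Suc a by simp
      qed
    qed
    have qw: "q j = q m * w j" for j
    proof (cases "m \<le> j \<and> j \<le> c")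
      case True
      then obtain k where "j = m + k" by (metis le_add_diff_inverse)
      then show ?thesis using up[of k] True by (simp add: w_def)
    next
      case False
      then show ?thesis using qlow q unfolding is_steady_state_def w_def by (auto simp: not_le)
    qed
    have "1 = (\<Sum>j\<le>c. q j)" using q unfolding is_steady_state_def by auto
    also have "\<dots> = (\<Sum>j\<le>c. q m * w j)" by (intro sum.cong refl) (rule qw)
    also have "\<dots> = q m * S" by (simp add: S_def sum_distrib_left)
    finally have "q m = 1 / S" using S1 by (simp add: field_simps)
    then show ?thesis
    proof -
      assume qm: "q m = 1 / S"
      show ?thesis
      proof
        fix j show "q j = p j" using qw[of j] qm by (simp add: p_def)
      qed
    qed
  qed
  show ?thesis using ssp uniq by blast
qed

lemma ss_is:
  assumes "0 < lam" "0 < d" "policy c x"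
  shows "is_steady_state c lam d x (steady_state c lam d x)"
  unfolding steady_state_def using ss_char[OF assms] by (rule theI')



lemma balc:
  assumes ss: "is_steady_state c lam d x p" and lam: "lam = real c / (xs * d)"
    and xs: "0 < xs" and d: "0 < d" and j: "j \<in> {1..c}"
  shows "p j * real c * x j = xs * (p (j - 1) * (real c - real (j - 1)))"
proof -
  have "p j * lam * x j = p (j - 1) * (real c - real j + 1) / d"
    using ss j unfolding is_steady_state_def by auto
  moreover have "real c - real j + 1 = real c - real (j - 1)" using j by (auto simp: of_nat_diff)
  ultimately show ?thesis using xs d unfolding lam by (simp add: field_simps)
qed

lemma shift_sum: "(\<Sum>j\<in>{1..c}. f (j - 1)) = (\<Sum>i<c. (f :: nat \<Rightarrow> real) i)"
  by (simp add: sum.atLeast1_atMost_eq)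

lemma split0: "(\<Sum>i\<le>c. (f :: nat \<Rightarrow> real) i) = f 0 + (\<Sum>j\<in>{1..c}. f j)"
proof -
  have "{..c} = insert 0 {1..c}" by auto
  then show ?thesis by simp
qed

lemma weighted:
  assumes ss: "is_steady_state c lam d x p" and lam: "lam = real c / (xs * d)"
    and xs: "0 < xs" and d: "0 < d"
  shows "(\<Sum>j\<in>{1..c}. p j * real c * x j * \<phi> (j - 1)) = xs * (\<Sum>i\<le>c. p i * (real c - real i) * \<phi> i)"
proof -
  define F where "F i = xs * (p i * (real c - real i) * \<phi> i)" for i
  have "(\<Sum>j\<in>{1..c}. p j * real c * x j * \<phi> (j - 1)) = (\<Sum>j\<in>{1..c}. F (j - 1))"
    by (intro sum.cong refl) (simp add: F_def balc[OF assms])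
  also have "\<dots> = (\<Sum>i<c. F i)" by (rule shift_sum)
  also have "\<dots> = (\<Sum>i\<le>c. F i)" by (simp add: lessThan_Suc_atMost[symmetric] F_def)
  finally show ?thesis by (simp add: F_def sum_distrib_left)
qed

lemma ss_basic:
  assumes ss: "is_steady_state c lam d x p"
  shows "\<And>j. j \<le> c \<Longrightarrow> 0 \<le> p j" "(\<Sum>j\<le>c. p j) = 1" "\<And>j. j \<le> c \<Longrightarrow> p j \<le> 1"
proof -
  show nn: "\<And>j. j \<le> c \<Longrightarrow> 0 \<le> p j" using ss unfolding is_steady_state_def by auto
  show s1: "(\<Sum>j\<le>c. p j) = 1" using ss unfolding is_steady_state_def by auto
  fix j assume "j \<le> c"
  then have "p j \<le> (\<Sum>j\<le>c. p j)" using nn by (intro member_le_sum) auto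
  then show "p j \<le> 1" using s1 by simp
qed

lemma flow:
  assumes ss: "is_steady_state c lam d x p" and lam: "lam = real c / (xs * d)"
    and xs: "0 < xs" and d: "0 < d"
  shows "real c * (\<Sum>j\<in>{1..c}. p j * x j) = xs * (real c - (\<Sum>i\<le>c. real i * p i))"
proof -
  have "real c * (\<Sum>j\<in>{1..c}. p j * x j) = (\<Sum>j\<in>{1..c}. p j * real c * x j * (\<lambda>_. 1) (j - 1))"
    by (simp add: sum_distrib_left mult_ac)
  also have "\<dots> = xs * (\<Sum>i\<le>c. p i * (real c - real i) * 1)" by (rule weighted[OF assms])
  also have "(\<Sum>i\<le>c. p i * (real c - real i) * 1) = real c * (\<Sum>i\<le>c. p i) - (\<Sum>i\<le>c. real i * p i)"
    by (simp add: algebra_simps sum_subtractf sum_distrib_left)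
  finally show ?thesis using ss_basic(2)[OF ss] by simp
qed

lemma alg:
  fixes c xs d lam G A H s u p0 :: real
  assumes "0 < c" "0 < xs" "0 < d" "lam = c / (xs * d)"
    "S1 = lam * (G * (1 - p0) + s * (xs * (c - u) / c) - s * xs * (1 - p0) - H)"
  shows "lam * G - S1 = lam * p0 * (G - s * xs) + s / d * u + lam * H"
proof -
  have k: "lam * xs = c / d" using assms by (simp add: field_simps)
  have "lam * (s * (xs * (c - u) / c)) = s * (c - u) * (lam * xs) / c" by (simp add: mult_ac)
  also have "\<dots> = s * (c - u) * (c / d) / c" using k by simp
  also have "\<dots> = s / d * (c - u)" using assms(1,3) by (simp add: field_simps)
  finally have k2: "lam * (s * (xs * (c - u) / c)) = s / d * (c - u)" .
  have "S1 = lam * G * (1 - p0) + lam * (s * (xs * (c - u) / c)) - s * (lam * xs) * (1 - p0) - lam * H"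
    using assms(5) by (simp add: algebra_simps)
  then have "S1 = lam * G * (1 - p0) + s / d * (c - u) - s * (c / d) * (1 - p0) - lam * H"
    using k k2 by simp
  moreover have "lam * p0 * (G - s * xs) = lam * p0 * G - s * p0 * (lam * xs)" by (simp add: algebra_simps)
  ultimately show ?thesis using k by (simp add: algebra_simps diff_divide_distrib add_divide_distrib)
qed

lemma decomp:
  assumes ss: "is_steady_state c lam d x p" and lam: "lam = real c / (xs * d)"
    and xs: "0 < xs" and d: "0 < d" and c: "0 < c"
  shows "lam * g xs - (\<Sum>j=1..c. p j * lam * g (x j)) =
     lam * p 0 * (g xs - s * xs) + s / d * (\<Sum>i\<le>c. real i * p i)
     + lam * (\<Sum>j=1..c. p j * (g xs + s * (x j - xs) - g (x j)))"
proof -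
  define u where "u = (\<Sum>i\<le>c. real i * p i)"
  have fl: "(\<Sum>j\<in>{1..c}. p j * x j) = xs * (real c - u) / real c"
    using flow[OF ss lam xs d] c unfolding u_def by (simp add: field_simps)
  have P: "(\<Sum>j\<in>{1..c}. p j) = 1 - p 0" using ss_basic(2)[OF ss] split0[of p c] by simp
  have "(\<Sum>j=1..c. p j * (g xs + s * (x j - xs) - g (x j))) =
        g xs * (\<Sum>j=1..c. p j) + s * (\<Sum>j=1..c. p j * x j) - s * xs * (\<Sum>j=1..c. p j)
        - (\<Sum>j=1..c. p j * g (x j))"
    by (simp add: algebra_simps sum.distrib sum_subtractf sum_distrib_left)
  then have "(\<Sum>j=1..c. p j * g (x j)) = g xs * (1 - p 0) + s * (xs * (real c - u) / real c)
      - s * xs * (1 - p 0) - (\<Sum>j=1..c. p j * (g xs + s * (x j - xs) - g (x j)))"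
    using fl P by simp
  moreover have "(\<Sum>j=1..c. p j * lam * g (x j)) = lam * (\<Sum>j=1..c. p j * g (x j))"
    by (simp add: sum_distrib_left mult_ac)
  ultimately have e1: "(\<Sum>j=1..c. p j * lam * g (x j)) = lam * (g xs * (1 - p 0) + s * (xs * (real c - u) / real c)
      - s * xs * (1 - p 0) - (\<Sum>j=1..c. p j * (g xs + s * (x j - xs) - g (x j))))" by simp
  show ?thesis unfolding u_def[symmetric]
    by (rule alg[OF _ xs d lam e1]) (use c in simp)
qed



lemma lowkey:
  assumes ss: "is_steady_state c lam d x p" and lam: "lam = real c / (xs * d)"
    and xs: "0 < xs" and d: "0 < d" and M: "1 \<le> M"
  shows "real c * xs * (1 - (\<Sum>i\<le>c. real i * p i) / real M)
     \<le> xs * real M * (\<Sum>i\<le>c. real i * p i) + real c * real M * (\<Sum>j=1..c. p j * \<bar>xs - x j\<bar>)"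
proof -
  define u where "u = (\<Sum>i\<le>c. real i * p i)"
  define v where "v = (\<Sum>j=1..c. p j * \<bar>xs - x j\<bar>)"
  define \<phi> where "\<phi> i = real (min (i + 1) M)" for i
  define \<psi> where "\<psi> i = (if i < M then 1 else 0 :: real)" for i
  have pnn: "\<And>j. j \<le> c \<Longrightarrow> 0 \<le> p j" and p1: "(\<Sum>j\<le>c. p j) = 1" using ss_basic[OF ss] by auto
  have W: "(\<Sum>j\<in>{1..c}. p j * real c * x j * \<phi> (j - 1)) = xs * (\<Sum>i\<le>c. p i * (real c - real i) * \<phi> i)"
    by (rule weighted[OF ss lam xs d])
  have L1: "(\<Sum>j\<in>{1..c}. p j * real c * x j * \<phi> (j - 1)) =
      real c * xs * (\<Sum>j\<in>{1..c}. p j * \<phi> (j - 1)) - real c * (\<Sum>j\<in>{1..c}. p j * (xs - x j) * \<phi> (j - 1))"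
    by (simp add: sum_distrib_left algebra_simps sum_subtractf)
  have R1: "xs * (\<Sum>i\<le>c. p i * (real c - real i) * \<phi> i) =
      real c * xs * (\<Sum>i\<le>c. p i * \<phi> i) - xs * (\<Sum>i\<le>c. real i * p i * \<phi> i)"
    by (simp add: sum_distrib_left algebra_simps sum_subtractf)
  have D: "(\<Sum>i\<le>c. p i * \<phi> i) - (\<Sum>j\<in>{1..c}. p j * \<phi> (j - 1)) = (\<Sum>i\<le>c. p i * \<psi> i)"
  proof -
    have "(\<Sum>i\<le>c. p i * \<phi> i) = p 0 * \<phi> 0 + (\<Sum>j\<in>{1..c}. p j * \<phi> j)" by (rule split0)
    moreover have "(\<Sum>i\<le>c. p i * \<psi> i) = p 0 * \<psi> 0 + (\<Sum>j\<in>{1..c}. p j * \<psi> j)" by (rule split0)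
    moreover have "\<phi> 0 = \<psi> 0" using M by (simp add: \<phi>_def \<psi>_def)
    moreover have "(\<Sum>j\<in>{1..c}. p j * \<phi> j) - (\<Sum>j\<in>{1..c}. p j * \<phi> (j - 1)) = (\<Sum>j\<in>{1..c}. p j * \<psi> j)"
    proof -
      have "(\<Sum>j\<in>{1..c}. p j * \<phi> j) - (\<Sum>j\<in>{1..c}. p j * \<phi> (j - 1)) = (\<Sum>j\<in>{1..c}. p j * (\<phi> j - \<phi> (j - 1)))"
        by (simp add: sum_subtractf algebra_simps)
      also have "\<dots> = (\<Sum>j\<in>{1..c}. p j * \<psi> j)"
        by (intro sum.cong refl) (auto simp: \<phi>_def \<psi>_def min_def)
      finally show ?thesis .
    qed
    ultimately show ?thesis by simp
  qed
  have E: "real c * xs * (\<Sum>i\<le>c. p i * \<psi> i) =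
      xs * (\<Sum>i\<le>c. real i * p i * \<phi> i) - real c * (\<Sum>j\<in>{1..c}. p j * (xs - x j) * \<phi> (j - 1))"
    using W L1 R1 D by (simp add: algebra_simps)
  have low: "1 - u / real M \<le> (\<Sum>i\<le>c. p i * \<psi> i)"
  proof -
    have "(\<Sum>i\<le>c. p i * (1 - real i / real M)) \<le> (\<Sum>i\<le>c. p i * \<psi> i)"
    proof (intro sum_mono)
      fix i assume "i \<in> {..c}"
      then have "0 \<le> p i" using pnn by auto
      moreover have "1 - real i / real M \<le> \<psi> i" using M by (auto simp: \<psi>_def field_simps)
      ultimately show "p i * (1 - real i / real M) \<le> p i * \<psi> i" by (metis mult_left_mono)
    qed
    moreover have "(\<Sum>i\<le>c. p i * (1 - real i / real M)) = 1 - u / real M"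
      using p1 by (simp add: u_def algebra_simps sum_subtractf sum_divide_distrib)
    ultimately show ?thesis by simp
  qed
  have up1: "(\<Sum>i\<le>c. real i * p i * \<phi> i) \<le> real M * u"
  proof -
    have "(\<Sum>i\<le>c. real i * p i * \<phi> i) \<le> (\<Sum>i\<le>c. real i * p i * real M)"
      using pnn by (intro sum_mono mult_left_mono) (auto simp: \<phi>_def)
    then show ?thesis by (simp add: u_def sum_distrib_left mult_ac)
  qed
  have up2: "- (\<Sum>j\<in>{1..c}. p j * (xs - x j) * \<phi> (j - 1)) \<le> real M * v"
  proof -
    have "(\<Sum>j\<in>{1..c}. - (p j * (xs - x j) * \<phi> (j - 1))) \<le> (\<Sum>j\<in>{1..c}. p j * \<bar>xs - x j\<bar> * real M)"
    proof (intro sum_mono)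
      fix j assume j: "j \<in> {1..c}"
      have "0 \<le> p j" using pnn j by auto
      moreover have "- ((xs - x j) * \<phi> (j - 1)) \<le> \<bar>xs - x j\<bar> * real M"
      proof -
        have "(- (xs - x j)) * \<phi> (j - 1) \<le> \<bar>xs - x j\<bar> * \<phi> (j - 1)"
          by (rule mult_right_mono) (auto simp: \<phi>_def)
        moreover have "- ((xs - x j) * \<phi> (j - 1)) = (- (xs - x j)) * \<phi> (j - 1)" by (rule minus_mult_left)
        ultimately have "- ((xs - x j) * \<phi> (j - 1)) \<le> \<bar>xs - x j\<bar> * \<phi> (j - 1)" by linarith
        also have "\<dots> \<le> \<bar>xs - x j\<bar> * real M" by (intro mult_left_mono) (auto simp: \<phi>_def)
        finally show ?thesis .
      qed
      ultimately have "p j * (- ((xs - x j) * \<phi> (j - 1))) \<le> p j * (\<bar>xs - x j\<bar> * real M)"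
        by (metis mult_left_mono)
      then show "- (p j * (xs - x j) * \<phi> (j - 1)) \<le> p j * \<bar>xs - x j\<bar> * real M" by (simp add: mult_ac)
    qed
    then show ?thesis by (simp add: v_def sum_distrib_left sum_negf mult_ac)
  qed
  have c0: "0 \<le> real c * xs" using xs by simp
  have "real c * xs * (1 - u / real M) \<le> real c * xs * (\<Sum>i\<le>c. p i * \<psi> i)"
    by (rule mult_left_mono[OF low c0])
  also have "\<dots> \<le> xs * (real M * u) + real c * (real M * v)"
  proof -
    have a: "xs * (\<Sum>i\<le>c. real i * p i * \<phi> i) \<le> xs * (real M * u)"
      using up1 xs by (intro mult_left_mono) auto
    have b: "real c * (- (\<Sum>j = 1..c. p j * (xs - x j) * \<phi> (j - 1))) \<le> real c * (real M * v)"
      using up2 by (intro mult_left_mono) auto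
    show ?thesis unfolding E using a b by simp
  qed
  finally show ?thesis unfolding u_def v_def by (simp add: mult_ac)
qed

lemma hgrowth:
  fixes g :: "real \<Rightarrow> real"
  assumes conc: "concave_on {0..1} g" and eps: "0 < \<epsilon>" "\<epsilon> < min xs (1 - xs)" and k2: "0 < k2"
    and A2: "\<forall>x\<in>{xs - \<epsilon>..xs + \<epsilon>}. g x \<le> g xs + s * (x - xs) - k2 * \<bar>x - xs\<bar> powr \<alpha>"
    and al: "1 \<le> \<alpha>" and x: "x \<in> {0..1}"
  shows "g xs + s * (x - xs) - g x \<ge> k2 * \<epsilon> powr (\<alpha> - 1) * \<bar>x - xs\<bar> powr \<alpha>"
proof (cases "\<bar>x - xs\<bar> \<le> \<epsilon>")
  case True
  have "\<epsilon> powr (\<alpha> - 1) \<le> 1" using eps al by (intro powr_le1) auto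
  then have "k2 * \<epsilon> powr (\<alpha> - 1) * \<bar>x - xs\<bar> powr \<alpha> \<le> k2 * 1 * \<bar>x - xs\<bar> powr \<alpha>"
    using k2 by (intro mult_right_mono mult_left_mono) auto
  also have "\<dots> \<le> g xs + s * (x - xs) - g x"
  proof -
    have "x \<in> {xs - \<epsilon>..xs + \<epsilon>}" using True by (auto simp: abs_le_iff)
    then have "g x \<le> g xs + s * (x - xs) - k2 * \<bar>x - xs\<bar> powr \<alpha>" using A2 by blast
    then show ?thesis by linarith
  qed
  finally show ?thesis .
next
  case False
  define D where "D = \<bar>x - xs\<bar>"
  define t where "t = \<epsilon> / D"
  have D: "\<epsilon> < D" "D \<le> 1" using False x eps by (auto simp: D_def)
  have t: "0 < t" "t < 1" using D eps by (auto simp: t_def)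
  define y where "y = (1 - t) * xs + t * x"
  have yxs: "y - xs = t * (x - xs)" by (simp add: y_def algebra_simps)
  have aby: "\<bar>y - xs\<bar> = \<epsilon>" using t D eps unfolding yxs D_def t_def by (simp add: abs_mult)
  have xs01: "xs \<in> {0..1}" using eps by auto
  have gy: "g y \<ge> (1 - t) * g xs + t * g x"
    using concave_onD[OF conc, of t xs x] t xs01 x by (simp add: y_def)
  have "y \<in> {xs - \<epsilon>..xs + \<epsilon>}" using aby by (auto simp: abs_le_iff)
  then have "g y \<le> g xs + s * (y - xs) - k2 * \<bar>y - xs\<bar> powr \<alpha>" using A2 by blast
  then have hy: "g xs + s * (y - xs) - g y \<ge> k2 * \<epsilon> powr \<alpha>" using aby by simp
  have "k2 * \<epsilon> powr \<alpha> \<le> t * (g xs + s * (x - xs) - g x)"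
    using hy gy yxs by (simp add: algebra_simps)
  moreover have "\<epsilon> powr \<alpha> = \<epsilon> powr (\<alpha> - 1) * \<epsilon>"
    using eps powr_add[of \<epsilon> "\<alpha> - 1" 1] by simp
  ultimately have "k2 * \<epsilon> powr (\<alpha> - 1) * \<epsilon> \<le> \<epsilon> / D * (g xs + s * (x - xs) - g x)"
    by (simp add: t_def mult_ac)
  then have "D * (k2 * \<epsilon> powr (\<alpha> - 1) * \<epsilon>) \<le> D * (\<epsilon> / D * (g xs + s * (x - xs) - g x))"
    using D eps by (intro mult_left_mono) auto
  also have "\<dots> = \<epsilon> * (g xs + s * (x - xs) - g x)" using D eps by simp
  finally have "\<epsilon> * (k2 * \<epsilon> powr (\<alpha> - 1) * D) \<le> \<epsilon> * (g xs + s * (x - xs) - g x)"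
    by (simp add: mult_ac)
  then have "k2 * \<epsilon> powr (\<alpha> - 1) * D \<le> g xs + s * (x - xs) - g x"
    using eps by simp
  moreover have "D powr \<alpha> \<le> D" using D eps al by (intro powr_le_one_le) auto
  moreover have "0 \<le> k2 * \<epsilon> powr (\<alpha> - 1)" using k2 by simp
  ultimately show ?thesis unfolding D_def by (smt (verit) mult_left_mono)
qed

lemma s_eq:
  fixes g :: "real \<Rightarrow> real"
  assumes eps: "0 < \<epsilon>" "\<epsilon> < min xs (1 - xs)" and k1: "0 \<le> k1"
    and A1: "\<forall>x\<in>{xs - \<epsilon>..xs + \<epsilon>}. g x \<ge> g xs + s1 * (x - xs) - k1 * \<bar>x - xs\<bar> powr \<alpha>"
    and sg: "supergradient g xs s2" and al: "1 < \<alpha>"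
  shows "s1 = s2"
proof (rule ccontr)
  assume ne: "s1 \<noteq> s2"
  define D where "D = \<bar>s1 - s2\<bar>"
  have Dp: "0 < D" using ne by (simp add: D_def)
  define t where "t = min \<epsilon> ((D / (2 * k1 + 1)) powr (1 / (\<alpha> - 1)))"
  have tp: "0 < t" using eps Dp k1 by (simp add: t_def)
  have te: "t \<le> \<epsilon>" by (simp add: t_def)
  have "t powr (\<alpha> - 1) \<le> ((D / (2 * k1 + 1)) powr (1 / (\<alpha> - 1))) powr (\<alpha> - 1)"
    using tp al by (intro powr_mono2) (auto simp: t_def)
  also have "\<dots> = D / (2 * k1 + 1)" using al Dp k1 by (simp add: powr_powr)
  finally have tpow: "t powr (\<alpha> - 1) \<le> D / (2 * k1 + 1)" .
  define \<sigma> where "\<sigma> = (if s1 > s2 then 1 else -1 :: real)"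
  define y where "y = xs + \<sigma> * t"
  have ya: "\<bar>y - xs\<bar> = t" using tp by (simp add: y_def \<sigma>_def)
  have yin: "y \<in> {xs - \<epsilon>..xs + \<epsilon>}" using ya te by auto
  have y01: "y \<in> {0..1}" using yin eps by auto
  have "g xs + s1 * (y - xs) - k1 * t powr \<alpha> \<le> g y" using A1 yin ya by auto
  moreover have "g y \<le> g xs + s2 * (y - xs)" using sg y01 unfolding supergradient_def by auto
  ultimately have "(s1 - s2) * (\<sigma> * t) \<le> k1 * t powr \<alpha>" by (simp add: y_def algebra_simps)
  moreover have "(s1 - s2) * \<sigma> = D" using ne by (auto simp: \<sigma>_def D_def)
  moreover have "(s1 - s2) * (\<sigma> * t) = ((s1 - s2) * \<sigma>) * t" by (simp add: mult_ac)
  ultimately have "D * t \<le> k1 * t powr \<alpha>" by simp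
  moreover have "t powr \<alpha> = t powr (\<alpha> - 1) * t" using tp powr_add[of t "\<alpha> - 1" 1] by simp
  ultimately have "D * t \<le> k1 * t powr (\<alpha> - 1) * t" by (simp add: mult_ac)
  then have "D \<le> k1 * t powr (\<alpha> - 1)" using tp by simp
  also have "\<dots> \<le> k1 * (D / (2 * k1 + 1))" using tpow k1 by (rule mult_left_mono)
  finally have "D * (2 * k1 + 1) \<le> k1 * D" using k1 by (simp add: field_simps)
  moreover have "D * (2 * k1 + 1) = 2 * (k1 * D) + D" by (simp add: algebra_simps)
  moreover have "0 \<le> k1 * D" using Dp k1 by simp
  ultimately show False using Dp by linarith
qed



lemma tailbound:
  assumes ss: "is_steady_state c lam d x p" and lam: "lam = real c / (xs * d)"
    and xs: "0 < xs" and d: "0 < d" and eta: "0 < \<eta>"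
    and hx: "\<And>j. \<tau> < j \<Longrightarrow> j \<le> c \<Longrightarrow> x j = xs + \<eta>"
  shows "\<eta> * (\<Sum>i\<le>c. max (real i - real \<tau>) 0 * p i) \<le> xs"
    "(\<Sum>i\<le>c. real i * p i) \<le> real \<tau> + (\<Sum>i\<le>c. max (real i - real \<tau>) 0 * p i)"
proof -
  define e where "e i = max (real i - real \<tau>) 0" for i
  define E where "E = (\<Sum>i\<le>c. e i * p i)"
  have pnn: "\<And>j. j \<le> c \<Longrightarrow> 0 \<le> p j" and p1: "(\<Sum>j\<le>c. p j) = 1" using ss_basic[OF ss] by auto
  have step: "(xs + \<eta>) * (e j * p j) \<le> xs * ((e (j - 1) + 1) * p (j - 1))" if j: "j \<in> {1..c}" for j
  proof (cases "j \<le> \<tau>")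
    case True
    then have "e j = 0" by (simp add: e_def)
    moreover have "0 \<le> xs * ((e (j - 1) + 1) * p (j - 1))" using xs pnn[of "j - 1"] j
      by (intro mult_nonneg_nonneg) (auto simp: e_def)
    ultimately show ?thesis by simp
  next
    case False
    have ej: "e j = e (j - 1) + 1" using False j by (auto simp: e_def of_nat_diff)
    have b: "p j * real c * (xs + \<eta>) = xs * (p (j - 1) * (real c - real (j - 1)))"
      using balc[OF ss lam xs d j] hx[of j] False j by simp
    have "xs * (p (j - 1) * (real c - real (j - 1))) \<le> xs * (p (j - 1) * real c)"
      using xs pnn[of "j - 1"] j by (intro mult_left_mono) auto
    then have "real c * (p j * (xs + \<eta>)) \<le> real c * (xs * p (j - 1))" using b by (simp add: mult_ac)
    moreover have "0 < real c" using j by auto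
    ultimately have "p j * (xs + \<eta>) \<le> xs * p (j - 1)" by simp
    then have "e j * (p j * (xs + \<eta>)) \<le> e j * (xs * p (j - 1))"
      by (intro mult_left_mono) (auto simp: e_def)
    then show ?thesis using ej by (simp add: algebra_simps)
  qed
  have "(xs + \<eta>) * (\<Sum>j\<in>{1..c}. e j * p j) \<le> (\<Sum>j\<in>{1..c}. xs * ((e (j - 1) + 1) * p (j - 1)))"
    unfolding sum_distrib_left by (intro sum_mono step)
  also have "\<dots> = (\<Sum>i<c. xs * ((e i + 1) * p i))" by (rule shift_sum)
  also have "\<dots> \<le> (\<Sum>i\<le>c. xs * ((e i + 1) * p i))"
    using xs pnn by (intro sum_mono2) (auto simp: e_def intro!: mult_nonneg_nonneg)
  also have "\<dots> = xs * (\<Sum>i\<le>c. (e i + 1) * p i)" by (simp add: sum_distrib_left)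
  also have "(\<Sum>i\<le>c. (e i + 1) * p i) = E + 1" using p1 by (simp add: E_def distrib_right sum.distrib)
  finally have "(xs + \<eta>) * (\<Sum>j\<in>{1..c}. e j * p j) \<le> xs * (E + 1)" .
  moreover have "(\<Sum>j\<in>{1..c}. e j * p j) = E" using split0[of "\<lambda>i. e i * p i" c] by (simp add: E_def e_def)
  ultimately show "\<eta> * (\<Sum>i\<le>c. max (real i - real \<tau>) 0 * p i) \<le> xs"
    unfolding E_def[symmetric] e_def[symmetric] by (simp add: algebra_simps)
  have "(\<Sum>i\<le>c. real i * p i) \<le> (\<Sum>i\<le>c. (real \<tau> + e i) * p i)"
    using pnn by (intro sum_mono mult_right_mono) (auto simp: e_def)
  also have "\<dots> = real \<tau> * (\<Sum>i\<le>c. p i) + E" by (simp add: E_def distrib_right sum.distrib sum_distrib_left)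
  also have "\<dots> = real \<tau> + E" using p1 by simp
  finally show "(\<Sum>i\<le>c. real i * p i) \<le> real \<tau> + (\<Sum>i\<le>c. max (real i - real \<tau>) 0 * p i)"
    by (simp add: E_def e_def)
qed

lemma headbound:
  assumes ss: "is_steady_state c lam d x p" and lam: "lam = real c / (xs * d)"
    and xs: "0 < xs" and d: "0 < d" and eta: "0 < \<eta>" "\<eta> < xs" and tc: "\<tau> \<le> c"
    and hx: "\<And>j. 1 \<le> j \<Longrightarrow> j \<le> \<tau> \<Longrightarrow> x j = xs - \<eta>"
    and cond: "xs * (real \<tau> - 1) \<le> real c * \<eta> / 2"
  shows "p 0 \<le> (1 - \<eta> / (2 * xs)) ^ \<tau>"
proof -
  define \<theta> where "\<theta> = 1 - \<eta> / (2 * xs)"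
  have th0: "0 \<le> \<theta>" using eta xs by (simp add: \<theta>_def field_simps)
  have pnn: "\<And>j. j \<le> c \<Longrightarrow> 0 \<le> p j" using ss_basic[OF ss] by auto
  have stp: "p (j - 1) \<le> \<theta> * p j" if j: "1 \<le> j" "j \<le> \<tau>" for j
  proof -
    have jc: "j \<in> {1..c}" using j tc by auto
    define K where "K = real c - real (j - 1)"
    have K: "0 < K" using jc by (auto simp: K_def of_nat_diff)
    have b: "p j * real c * (xs - \<eta>) = xs * (p (j - 1) * K)"
      using balc[OF ss lam xs d jc] hx[OF j] by (simp add: K_def)
    have "xs * real (j - 1) \<le> xs * (real \<tau> - 1)" using xs j by (intro mult_left_mono) (auto simp: of_nat_diff)
    then have a1: "xs * real (j - 1) \<le> real c * \<eta> / 2" using cond by linarith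
    have xt: "xs * \<theta> = xs - \<eta> / 2" using xs by (simp add: \<theta>_def field_simps)
    have ex: "(xs - \<eta> / 2) * K = real c * xs - xs * real (j - 1) - \<eta> * real c / 2 + \<eta> * real (j - 1) / 2"
      by (simp add: K_def algebra_simps)
    have "0 \<le> \<eta> * real (j - 1)" using eta by simp
    then have key: "real c * (xs - \<eta>) \<le> xs * \<theta> * K"
      unfolding xt ex using a1 by (simp add: algebra_simps)
    have "xs * K * p (j - 1) = p j * (real c * (xs - \<eta>))" using b by (simp add: mult_ac)
    also have "\<dots> \<le> p j * (xs * \<theta> * K)" using key pnn[of j] jc by (intro mult_left_mono) auto
    finally have "(xs * K) * p (j - 1) \<le> (xs * K) * (\<theta> * p j)" by (simp add: mult_ac)
    then show ?thesis using xs K by (simp add: mult_le_cancel_left_pos)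
  qed
  have ind: "k \<le> \<tau> \<longrightarrow> p 0 \<le> \<theta> ^ k * p k" for k
  proof (induction k)
    case 0 show ?case by simp
  next
    case (Suc k)
    show ?case
    proof
      assume a: "Suc k \<le> \<tau>"
      then have "p 0 \<le> \<theta> ^ k * p k" using Suc by simp
      also have "\<dots> \<le> \<theta> ^ k * (\<theta> * p (Suc k))"
        using stp[of "Suc k"] a th0 by (intro mult_left_mono) auto
      finally show "p 0 \<le> \<theta> ^ Suc k * p (Suc k)" by (simp add: mult_ac)
    qed
  qed
  have "p 0 \<le> \<theta> ^ \<tau> * p \<tau>" using ind by simp
  also have "\<dots> \<le> \<theta> ^ \<tau> * 1" using ss_basic(3)[OF ss tc] th0 by (intro mult_left_mono) auto
  finally show ?thesis by (simp add: \<theta>_def)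
qed

lemma theta_exp:
  assumes "0 \<le> a" "a \<le> 1"
  shows "(1 - a) ^ n \<le> exp (- (a * real n))"
proof -
  have "(1 - a) ^ n \<le> exp (- a) ^ n"
    using assms by (intro power_mono) (auto simp: exp_ge_add_one_self[of "-a", simplified])
  also have "\<dots> = exp (- (a * real n))" by (simp add: exp_of_nat_mult[symmetric] mult_ac)
  finally show ?thesis .
qed



lemma ptwise_split:
  fixes \<delta> \<beta> \<alpha> :: real
  assumes "0 \<le> \<delta>" "0 < \<beta>" "1 \<le> \<alpha>"
  shows "\<delta> \<le> \<beta> + \<delta> powr \<alpha> / \<beta> powr (\<alpha> - 1)"
proof (cases "\<delta> \<le> \<beta>")
  case True
  then show ?thesis using assms by (smt (verit) divide_nonneg_pos powr_ge_zero powr_gt_zero)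
next
  case False
  have "\<beta> powr (\<alpha> - 1) \<le> \<delta> powr (\<alpha> - 1)" using False assms by (intro powr_mono2) auto
  then have "\<beta> powr (\<alpha> - 1) * \<delta> \<le> \<delta> powr (\<alpha> - 1) * \<delta>" using assms by (intro mult_right_mono) auto
  also have "\<dots> = \<delta> powr \<alpha>" using False assms powr_add[of \<delta> "\<alpha> - 1" 1] by simp
  finally have "\<delta> \<le> \<delta> powr \<alpha> / \<beta> powr (\<alpha> - 1)" using assms by (simp add: field_simps)
  then show ?thesis using assms by simp
qed

lemma lower_one:
  fixes g :: "real \<Rightarrow> real"
  assumes ss: "is_steady_state c lam d x p" and lam: "lam = real c / (xs * d)"
    and xs: "0 < xs" and d: "0 < d" and c: "0 < c" and pol: "policy c x"
    and s: "0 < s" and sg: "supergradient g xs s" and g0: "g 0 = 0"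
    and hgr: "\<forall>y\<in>{0..1}. g xs + s * (y - xs) - g y \<ge> k * \<bar>y - xs\<bar> powr \<alpha>"
    and k: "0 < k" and al: "1 < \<alpha>"
    and T: "1 \<le> T" "T powr (\<alpha> + 1) = real c" "12 * T\<^sup>2 \<le> real c"
  shows "min (s / d) (k * (xs / 24) powr \<alpha> / (xs * d)) * T \<le> lam * g xs - (\<Sum>j=1..c. p j * lam * g (x j))"
proof -
  define u where "u = (\<Sum>i\<le>c. real i * p i)"
  define v where "v = (\<Sum>j=1..c. p j * \<bar>xs - x j\<bar>)"
  define H where "H = (\<Sum>j=1..c. p j * \<bar>x j - xs\<bar> powr \<alpha>)"
  define K1 where "K1 = min (s / d) (k * (xs / 24) powr \<alpha> / (xs * d))"
  have pnn: "\<And>j. j \<le> c \<Longrightarrow> 0 \<le> p j" and p1: "(\<Sum>j\<le>c. p j) = 1" using ss_basic[OF ss] by auto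
  have P1: "(\<Sum>j=1..c. p j) \<le> 1" using p1 split0[of p c] pnn[of 0] by simp
  have lam0: "0 < lam" using c xs d by (simp add: lam)
  have u0: "0 \<le> u" unfolding u_def using pnn by (intro sum_nonneg) auto
  have v0: "0 \<le> v" unfolding v_def using pnn by (intro sum_nonneg) auto
  have H0: "0 \<le> H" unfolding H_def using pnn by (intro sum_nonneg) auto
  have dec: "lam * g xs - (\<Sum>j=1..c. p j * lam * g (x j)) =
     lam * p 0 * (g xs - s * xs) + s / d * u + lam * (\<Sum>j=1..c. p j * (g xs + s * (x j - xs) - g (x j)))"
    unfolding u_def by (rule decomp[OF ss lam xs d c])
  have h0: "0 \<le> g xs - s * xs" using sg g0 unfolding supergradient_def by (auto dest: bspec[of _ _ 0])
  have t1: "0 \<le> lam * p 0 * (g xs - s * xs)" using lam0 pnn[of 0] h0 by simp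
  have t3: "k * H \<le> (\<Sum>j=1..c. p j * (g xs + s * (x j - xs) - g (x j)))"
  proof -
    have "k * H = (\<Sum>j=1..c. p j * (k * \<bar>x j - xs\<bar> powr \<alpha>))" by (simp add: H_def sum_distrib_left mult_ac)
    also have "\<dots> \<le> (\<Sum>j=1..c. p j * (g xs + s * (x j - xs) - g (x j)))"
    proof (intro sum_mono mult_left_mono)
      fix j assume j: "j \<in> {1..c}"
      then have "x j \<in> {0..1}" using pol unfolding policy_def by auto
      then show "k * \<bar>x j - xs\<bar> powr \<alpha> \<le> g xs + s * (x j - xs) - g (x j)" using hgr by blast
      show "0 \<le> p j" using j pnn by auto
    qed
    finally show ?thesis .
  qed
  have L: "s / d * u + lam * (k * H) \<le> lam * g xs - (\<Sum>j=1..c. p j * lam * g (x j))"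
    unfolding dec using t1 t3 lam0 by (smt (verit) mult_left_mono)
  have T0: "0 < T" using T by simp
  have cT: "real c = T powr \<alpha> * T" using T(2) T0 powr_add[of T \<alpha> 1] by simp
  show ?thesis
  proof (cases "T \<le> u")
    case True
    have "K1 * T \<le> s / d * T" unfolding K1_def using T0 by (intro mult_right_mono) auto
    also have "\<dots> \<le> s / d * u" using True s d by (intro mult_left_mono) auto
    also have "\<dots> \<le> s / d * u + lam * (k * H)" using lam0 k H0 by simp
    finally show ?thesis using L unfolding K1_def by linarith
  next
    case False
    define M where "M = nat \<lceil>2 * T\<rceil>"
    have M1: "2 * T \<le> real M" "real M \<le> 3 * T" using T unfolding M_def by linarith+
    have Mge: "1 \<le> M" using M1 T by linarith
    have LK: "real c * xs * (1 - u / real M) \<le> xs * real M * u + real c * real M * v"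
      using lowkey[OF ss lam xs d Mge] unfolding u_def v_def .
    have "u / real M \<le> u / (2 * T)" using u0 M1 T0 by (intro divide_left_mono) auto
    also have "\<dots> < 1 / 2" using False T0 by (simp add: field_simps)
    finally have f1: "real c * xs * (1 / 2) \<le> real c * xs * (1 - u / real M)"
      using c xs by (intro mult_left_mono) auto
    have f2: "xs * real M * u \<le> xs * (3 * T) * T"
      using M1 u0 False xs T0 by (intro mult_mono) auto
    have f3: "real c * real M * v \<le> real c * (3 * T) * v"
      using M1 v0 by (intro mult_right_mono mult_left_mono) auto
    have f4: "xs * (3 * T) * T \<le> real c * xs / 4" using T(3) xs by (simp add: power2_eq_square field_simps)
    have "real c * xs / 4 \<le> real c * (3 * T) * v" using f1 f2 f3 f4 LK by linarith
    then have vb: "xs / (12 * T) \<le> v" using c T0 by (simp add: field_simps)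
    define \<beta> where "\<beta> = xs / (24 * T)"
    have b0: "0 < \<beta>" using xs T0 by (simp add: \<beta>_def)
    have "v \<le> (\<Sum>j=1..c. p j * (\<beta> + \<bar>x j - xs\<bar> powr \<alpha> / \<beta> powr (\<alpha> - 1)))"
      unfolding v_def
    proof (intro sum_mono mult_left_mono)
      fix j assume j: "j \<in> {1..c}"
      show "\<bar>xs - x j\<bar> \<le> \<beta> + \<bar>x j - xs\<bar> powr \<alpha> / \<beta> powr (\<alpha> - 1)"
        using ptwise_split[of "\<bar>xs - x j\<bar>" \<beta> \<alpha>] b0 al by (simp add: abs_minus_commute)
      show "0 \<le> p j" using j pnn by auto
    qed
    also have "\<dots> = \<beta> * (\<Sum>j=1..c. p j) + H / \<beta> powr (\<alpha> - 1)"
      by (simp add: H_def algebra_simps sum.distrib sum_distrib_left sum_divide_distrib)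
    also have "\<dots> \<le> \<beta> + H / \<beta> powr (\<alpha> - 1)" using P1 b0 by simp
    finally have "v - \<beta> \<le> H / \<beta> powr (\<alpha> - 1)" by simp
    moreover have "\<beta> \<le> v - \<beta>" using vb by (simp add: \<beta>_def field_simps)
    ultimately have "\<beta> \<le> H / \<beta> powr (\<alpha> - 1)" by linarith
    then have "\<beta> * \<beta> powr (\<alpha> - 1) \<le> H" using b0 by (simp add: field_simps)
    moreover have "\<beta> * \<beta> powr (\<alpha> - 1) = \<beta> powr \<alpha>" using b0 powr_add[of \<beta> 1 "\<alpha> - 1"] by simp
    ultimately have Hb: "\<beta> powr \<alpha> \<le> H" by simp
    have "\<beta> powr \<alpha> = (xs / 24) powr \<alpha> / T powr \<alpha>"
      unfolding \<beta>_def using xs T0 by (simp add: powr_divide[symmetric])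
    then have "lam * (k * \<beta> powr \<alpha>) = k * (xs / 24) powr \<alpha> / (xs * d) * (real c / T powr \<alpha>)"
      by (simp add: lam)
    also have "real c / T powr \<alpha> = T" using cT T0 by simp
    finally have e1: "lam * (k * \<beta> powr \<alpha>) = k * (xs / 24) powr \<alpha> / (xs * d) * T" .
    have "K1 * T \<le> k * (xs / 24) powr \<alpha> / (xs * d) * T" unfolding K1_def using T0 by (intro mult_right_mono) auto
    also have "\<dots> = lam * (k * \<beta> powr \<alpha>)" using e1 by simp
    also have "\<dots> \<le> lam * (k * H)" using Hb lam0 k by (intro mult_left_mono) auto
    also have "\<dots> \<le> s / d * u + lam * (k * H)" using s d u0 by simp
    finally show ?thesis using L unfolding K1_def by linarith
  qed
qed

lemma upper_one:
  fixes g :: "real \<Rightarrow> real"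
  assumes lam: "lam = real c / (xs * d)"
    and xs: "0 < xs" "xs < 1" and d: "0 < d" and c3: "3 \<le> c"
    and s: "0 \<le> s" and sg: "supergradient g xs s" and g0: "g 0 = 0"
    and eps: "0 < \<epsilon>" "\<epsilon> < min xs (1 - xs)" and k1: "0 \<le> k1"
    and A1: "\<forall>y\<in>{xs - \<epsilon>..xs + \<epsilon>}. g y \<ge> g xs + s * (y - xs) - k1 * \<bar>y - xs\<bar> powr \<alpha>"
    and al: "1 < \<alpha>"
    and T: "1 \<le> T" "T powr (\<alpha> + 1) = real c" "1 / T \<le> \<epsilon>"
       "4 * xs\<^sup>2 * T\<^sup>2 * ln (real c) \<le> real c" "2 * xs * T * ln (real c) + 1 \<le> real c"
  shows "\<exists>xTP. policy c xTP \<and> two_price_policy c xTP \<and>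
     lam * g xs - avg_reward c lam d g xTP
       \<le> ((g xs - s * xs) / (xs * d) + s / d * (3 * xs + 1) + k1 / (xs * d)) * T * (ln (real c))\<^sup>2"
proof -
  define \<eta> where "\<eta> = 1 / T"
  define \<tau> where "\<tau> = nat \<lceil>2 * xs * T * ln (real c)\<rceil>"
  define x where "x j = (if j \<le> \<tau> then xs - \<eta> else xs + \<eta>)" for j
  have T0: "0 < T" using T by simp
  have c0: "0 < c" using c3 by simp
  have lc: "1 \<le> ln (real c)"
  proof -
    have "exp 1 \<le> real c" using exp_le c3 by linarith
    then show ?thesis using c0 by (simp add: ln_ge_iff)
  qed
  have e0: "0 < \<eta>" "\<eta> \<le> \<epsilon>" using T0 T(3) by (auto simp: \<eta>_def)
  have e1: "\<eta> < xs" "xs + \<eta> < 1" using e0 eps by auto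
  have pos: "0 < 2 * xs * T * ln (real c)" using xs T0 lc by simp
  have tr: "real \<tau> = real_of_int \<lceil>2 * xs * T * ln (real c)\<rceil>" using pos by (simp add: \<tau>_def)
  have tau1: "2 * xs * T * ln (real c) \<le> real \<tau>" "real \<tau> \<le> 2 * xs * T * ln (real c) + 1"
    unfolding tr by (rule le_of_int_ceiling) (rule of_int_ceiling_le_add_one)
  have tau_ge: "1 \<le> \<tau>" using pos tau1(1) by linarith
  have tau_le: "\<tau> \<le> c" using tau1(2) T(5) by linarith
  have pol: "policy c x" unfolding policy_def x_def using e1 e0 by auto
  have tp: "two_price_policy c x" unfolding two_price_policy_def
    by (rule exI[of _ "xs - \<eta>"], rule exI[of _ "xs + \<eta>"], rule exI[of _ \<tau>])
       (use e1 e0 tau_ge tau_le in \<open>auto simp: x_def\<close>)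
  have lam0: "0 < lam" using c0 xs d by (simp add: lam)
  define p where "p = steady_state c lam d x"
  have ss: "is_steady_state c lam d x p" unfolding p_def by (rule ss_is[OF lam0 d pol])
  have pnn: "\<And>j. j \<le> c \<Longrightarrow> 0 \<le> p j" and p1: "(\<Sum>j\<le>c. p j) = 1" using ss_basic[OF ss] by auto
  have P1: "(\<Sum>j=1..c. p j) \<le> 1" using p1 split0[of p c] pnn[of 0] by simp
  define u where "u = (\<Sum>i\<le>c. real i * p i)"
  have dec: "lam * g xs - (\<Sum>j=1..c. p j * lam * g (x j)) =
     lam * p 0 * (g xs - s * xs) + s / d * u + lam * (\<Sum>j=1..c. p j * (g xs + s * (x j - xs) - g (x j)))"
    unfolding u_def by (rule decomp[OF ss lam xs(1) d c0])
  have h0: "0 \<le> g xs - s * xs" using sg g0 unfolding supergradient_def by (auto dest: bspec[of _ _ 0])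
  have cond: "xs * (real \<tau> - 1) \<le> real c * \<eta> / 2"
  proof -
    have "xs * (real \<tau> - 1) \<le> xs * (2 * xs * T * ln (real c))" using tau1 xs by (intro mult_left_mono) auto
    also have "\<dots> = (4 * xs\<^sup>2 * T\<^sup>2 * ln (real c)) / (2 * T)" using T0 by (simp add: power2_eq_square field_simps)
    also have "\<dots> \<le> real c / (2 * T)" using T(4) T0 by (intro divide_right_mono) auto
    also have "\<dots> = real c * \<eta> / 2" by (simp add: \<eta>_def)
    finally show ?thesis .
  qed
  have "p 0 \<le> (1 - \<eta> / (2 * xs)) ^ \<tau>"
    by (rule headbound[OF ss lam xs(1) d e0(1) e1(1) tau_le]) (use cond in \<open>auto simp: x_def\<close>)
  also have "\<dots> \<le> exp (- (\<eta> / (2 * xs) * real \<tau>))"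
    using e0 e1 xs by (intro theta_exp) (auto simp: field_simps)
  also have "\<dots> \<le> exp (- ln (real c))"
  proof -
    have "\<eta> / (2 * xs) * (2 * xs * T * ln (real c)) \<le> \<eta> / (2 * xs) * real \<tau>"
      using tau1 e0 xs by (intro mult_left_mono) auto
    moreover have "\<eta> / (2 * xs) * (2 * xs * T * ln (real c)) = ln (real c)"
      using xs T0 by (simp add: \<eta>_def field_simps)
    ultimately show ?thesis by simp
  qed
  also have "\<dots> = 1 / real c" using c0 by (simp add: exp_minus inverse_eq_divide)
  finally have p0: "p 0 \<le> 1 / real c" .
  have t1: "lam * p 0 * (g xs - s * xs) \<le> (g xs - s * xs) / (xs * d)"
  proof -
    have "lam * p 0 * (g xs - s * xs) \<le> lam * (1 / real c) * (g xs - s * xs)"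
      using p0 lam0 h0 by (intro mult_right_mono mult_left_mono) auto
    also have "\<dots> = (g xs - s * xs) / (xs * d)" using c0 by (simp add: lam)
    finally show ?thesis .
  qed
  have tb: "\<eta> * (\<Sum>i\<le>c. max (real i - real \<tau>) 0 * p i) \<le> xs"
      "u \<le> real \<tau> + (\<Sum>i\<le>c. max (real i - real \<tau>) 0 * p i)"
    using tailbound[OF ss lam xs(1) d e0(1), of \<tau>] unfolding u_def by (auto simp: x_def)
  have "(\<Sum>i\<le>c. max (real i - real \<tau>) 0 * p i) \<le> xs * T"
    using tb(1) T0 by (simp add: \<eta>_def field_simps)
  then have ub: "u \<le> 2 * xs * T * ln (real c) + 1 + xs * T" using tb(2) tau1 by linarith
  have t3: "(\<Sum>j=1..c. p j * (g xs + s * (x j - xs) - g (x j))) \<le> k1 * \<eta> powr \<alpha>"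
  proof -
    have "(\<Sum>j=1..c. p j * (g xs + s * (x j - xs) - g (x j))) \<le> (\<Sum>j=1..c. p j * (k1 * \<eta> powr \<alpha>))"
    proof (intro sum_mono mult_left_mono)
      fix j assume j: "j \<in> {1..c}"
      have xj: "x j \<in> {xs - \<epsilon>..xs + \<epsilon>}" "\<bar>x j - xs\<bar> = \<eta>" using e0 by (auto simp: x_def)
      then show "g xs + s * (x j - xs) - g (x j) \<le> k1 * \<eta> powr \<alpha>" using A1 by fastforce
      show "0 \<le> p j" using j pnn by auto
    qed
    also have "\<dots> = (\<Sum>j=1..c. p j) * (k1 * \<eta> powr \<alpha>)" by (simp add: sum_distrib_right)
    also have "\<dots> \<le> 1 * (k1 * \<eta> powr \<alpha>)" using P1 k1 by (intro mult_right_mono) auto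
    finally show ?thesis by simp
  qed
  have cT: "real c = T powr \<alpha> * T" using T(2) T0 powr_add[of T \<alpha> 1] by simp
  have "lam * (k1 * \<eta> powr \<alpha>) = k1 / (xs * d) * (real c / T powr \<alpha>)"
    using T0 by (simp add: lam \<eta>_def powr_divide)
  also have "real c / T powr \<alpha> = T" using cT T0 by simp
  finally have t3': "lam * (\<Sum>j=1..c. p j * (g xs + s * (x j - xs) - g (x j))) \<le> k1 / (xs * d) * T"
    using t3 lam0 by (metis mult_left_mono less_imp_le)
  have t2: "s / d * u \<le> s / d * (2 * xs * T * ln (real c) + 1 + xs * T)"
    using ub s d by (intro mult_left_mono) auto
  define Q where "Q = T * (ln (real c))\<^sup>2"
  have Q1: "T * ln (real c) \<le> Q" "T \<le> Q" "1 \<le> Q"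
  proof -
    have "ln (real c) \<le> (ln (real c))\<^sup>2" using lc by (simp add: power2_eq_square)
    then show a: "T * ln (real c) \<le> Q" unfolding Q_def using T0 by (intro mult_left_mono) auto
    have "T * 1 \<le> T * ln (real c)" using lc T0 by (intro mult_left_mono) auto
    then show b: "T \<le> Q" using a by simp
    show "1 \<le> Q" using b T by linarith
  qed
  have sd: "0 \<le> s / d" using s d by simp
  have "s / d * (2 * xs * T * ln (real c) + 1 + xs * T) \<le> s / d * (2 * xs * Q + Q + xs * Q)"
  proof (intro mult_left_mono sd)
    have "2 * xs * (T * ln (real c)) \<le> 2 * xs * Q" using Q1 xs by (intro mult_left_mono) auto
    moreover have "xs * T \<le> xs * Q" using Q1 xs by (intro mult_left_mono) auto
    ultimately show "2 * xs * T * ln (real c) + 1 + xs * T \<le> 2 * xs * Q + Q + xs * Q" using Q1 by (simp add: mult_ac)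
  qed
  moreover have "(g xs - s * xs) / (xs * d) \<le> (g xs - s * xs) / (xs * d) * Q"
  proof -
    have "(g xs - s * xs) / (xs * d) * 1 \<le> (g xs - s * xs) / (xs * d) * Q"
      using Q1 h0 xs d by (intro mult_left_mono) auto
    then show ?thesis by simp
  qed
  moreover have "k1 / (xs * d) * T \<le> k1 / (xs * d) * Q" using Q1 k1 xs d by (intro mult_left_mono) auto
  ultimately have fin: "lam * g xs - (\<Sum>j=1..c. p j * lam * g (x j))
      \<le> ((g xs - s * xs) / (xs * d) + s / d * (3 * xs + 1) + k1 / (xs * d)) * Q"
    unfolding dec using t1 t2 t3' by (simp add: algebra_simps)
  show ?thesis
    by (rule exI[of _ x]) (use pol tp fin in \<open>simp add: avg_reward_def p_def Q_def mult_ac\<close>)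
qed



lemma conds:
  fixes \<alpha> \<epsilon> xs :: real
  assumes al: "1 < \<alpha>" and eps: "0 < \<epsilon>" and xs: "0 < xs" "xs < 1"
  shows "\<exists>c0::nat. \<forall>c\<ge>c0. 3 \<le> c \<and> 1 \<le> real c powr (1 / (\<alpha> + 1)) \<and>
     (real c powr (1 / (\<alpha> + 1))) powr (\<alpha> + 1) = real c \<and> 1 / real c powr (1 / (\<alpha> + 1)) \<le> \<epsilon> \<and>
     12 * (real c powr (1 / (\<alpha> + 1)))\<^sup>2 \<le> real c \<and>
     4 * xs\<^sup>2 * (real c powr (1 / (\<alpha> + 1)))\<^sup>2 * ln (real c) \<le> real c \<and>
     2 * xs * real c powr (1 / (\<alpha> + 1)) * ln (real c) + 1 \<le> real c"
proof -
  define \<gamma> where "\<gamma> = (\<alpha> - 1) / (\<alpha> + 1)"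
  have g0: "0 < \<gamma>" using al by (simp add: \<gamma>_def)
  define A where "A = 12 + 8 / \<gamma>"
  have A0: "12 \<le> A" "8 / \<gamma> \<le> A" using g0 by (auto simp: A_def)
  define c0 where "c0 = nat \<lceil>max 3 (max (A powr (2 / \<gamma>)) ((1 / \<epsilon>) powr (\<alpha> + 1)))\<rceil>"
  show ?thesis
  proof (rule exI[of _ c0], intro allI impI)
    fix c :: nat assume cc: "c0 \<le> c"
    have cr: "max 3 (max (A powr (2 / \<gamma>)) ((1 / \<epsilon>) powr (\<alpha> + 1))) \<le> real c"
      using cc unfolding c0_def by linarith
    then have c3r: "3 \<le> real c" and cA: "A powr (2 / \<gamma>) \<le> real c" and ce: "(1 / \<epsilon>) powr (\<alpha> + 1) \<le> real c"
      by auto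
    have c3: "3 \<le> c" using c3r by linarith
    have cpos: "0 < real c" using c3r by linarith
    define T where "T = real c powr (1 / (\<alpha> + 1))"
    have T0: "0 < T" using cpos by (simp add: T_def)
    have T1: "1 \<le> T" unfolding T_def using c3r al by (intro ge_one_powr_ge_zero) auto
    have Tp: "T powr (\<alpha> + 1) = real c" unfolding T_def using al cpos by (simp add: powr_powr)
    have "(1 / \<epsilon>) = ((1 / \<epsilon>) powr (\<alpha> + 1)) powr (1 / (\<alpha> + 1))"
      using al eps by (simp add: powr_powr)
    also have "\<dots> \<le> T" unfolding T_def using ce al eps by (intro powr_mono2) auto
    finally have Te: "1 / T \<le> \<epsilon>" using eps T0 by (simp add: field_simps)
    define y where "y = real c powr (\<gamma> / 2)"
    have yA: "A \<le> y"
    proof -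
      have "A = (A powr (2 / \<gamma>)) powr (\<gamma> / 2)" using A0 g0 by (simp add: powr_powr)
      also have "\<dots> \<le> y" unfolding y_def using cA g0 by (intro powr_mono2) auto
      finally show ?thesis .
    qed
    have y0: "0 < y" using yA A0 by linarith
    have T2: "T\<^sup>2 = real c powr (2 / (\<alpha> + 1))"
      unfolding T_def using cpos by (simp add: powr_powr[symmetric] powr_realpow' power2_eq_square powr_add[symmetric])
    have yy: "y * y = real c powr \<gamma>" unfolding y_def using cpos by (simp add: powr_add[symmetric])
    have cdec: "real c = y * y * T\<^sup>2"
    proof -
      have "\<gamma> + 2 / (\<alpha> + 1) = (\<alpha> - 1 + 2) / (\<alpha> + 1)" unfolding \<gamma>_def by (rule add_divide_distrib[symmetric])
      also have "\<dots> = 1" using al by simp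
      finally have "\<gamma> + 2 / (\<alpha> + 1) = 1" .
      then have "real c = real c powr (\<gamma> + 2 / (\<alpha> + 1))" using cpos by simp
      also have "\<dots> = y * y * T\<^sup>2" using yy T2 by (simp add: powr_add)
      finally show ?thesis .
    qed
    have lnb: "ln (real c) \<le> y / (\<gamma> / 2)" unfolding y_def using c3r g0 by (intro ln_powr_bound) auto
    have ln0: "0 \<le> ln (real c)" using c3r by simp
    have yb: "8 / \<gamma> * y \<le> y * y" using A0 yA y0 by (intro mult_right_mono) auto
    have lny: "4 * ln (real c) \<le> y * y"
    proof -
      have "4 * ln (real c) \<le> 4 * (y / (\<gamma> / 2))" using lnb by simp
      also have "\<dots> = 8 / \<gamma> * y" by (simp add: field_simps)
      finally show ?thesis using yb by linarith
    qed
    have y12: "12 \<le> y * y"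
    proof -
      have "12 * 1 \<le> y * y" using A0 yA y0 by (intro mult_mono) auto
      then show ?thesis by simp
    qed
    have TT: "0 \<le> T\<^sup>2" by simp
    have a1: "12 * T\<^sup>2 \<le> real c" unfolding cdec using y12 TT by (intro mult_right_mono) auto
    have xs2: "xs\<^sup>2 \<le> 1" using xs by (simp add: power_le_one)
    have "4 * xs\<^sup>2 * ln (real c) \<le> 4 * 1 * ln (real c)" using xs2 ln0 by (intro mult_right_mono mult_left_mono) auto
    then have "4 * xs\<^sup>2 * ln (real c) \<le> y * y" using lny by linarith
    then have l4: "(4 * xs\<^sup>2 * ln (real c)) * T\<^sup>2 \<le> (y * y) * T\<^sup>2" by (rule mult_right_mono[OF _ TT])
    have a2: "4 * xs\<^sup>2 * T\<^sup>2 * ln (real c) \<le> real c"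
    proof -
      have "4 * xs\<^sup>2 * T\<^sup>2 * ln (real c) = (4 * xs\<^sup>2 * ln (real c)) * T\<^sup>2" by (simp add: mult_ac)
      also have "\<dots> \<le> (y * y) * T\<^sup>2" by (rule l4)
      also have "\<dots> = real c" using cdec by simp
      finally show ?thesis .
    qed
    have "T \<le> T\<^sup>2" using T1 by (simp add: power2_eq_square)
    have "2 * xs * T * ln (real c) \<le> 2 * 1 * T\<^sup>2 * ln (real c)"
      using xs \<open>T \<le> T\<^sup>2\<close> T0 ln0 by (intro mult_right_mono mult_mono) auto
    also have "\<dots> = T\<^sup>2 * (2 * ln (real c))" by simp
    also have "\<dots> \<le> T\<^sup>2 * (y * y / 2)" using lny TT by (intro mult_left_mono) auto
    also have "\<dots> = real c / 2" unfolding cdec by simp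
    finally have a3: "2 * xs * T * ln (real c) + 1 \<le> real c" using c3r by linarith
    show "3 \<le> c \<and> 1 \<le> real c powr (1 / (\<alpha> + 1)) \<and>
     (real c powr (1 / (\<alpha> + 1))) powr (\<alpha> + 1) = real c \<and> 1 / real c powr (1 / (\<alpha> + 1)) \<le> \<epsilon> \<and>
     12 * (real c powr (1 / (\<alpha> + 1)))\<^sup>2 \<le> real c \<and>
     4 * xs\<^sup>2 * (real c powr (1 / (\<alpha> + 1)))\<^sup>2 * ln (real c) \<le> real c \<and>
     2 * xs * real c powr (1 / (\<alpha> + 1)) * ln (real c) + 1 \<le> real c"
      using c3 T1 Tp Te a1 a2 a3 unfolding T_def by blast
  qed
qed



theorem corollary1:
  fixes g :: "real \<Rightarrow> real" and xs d \<alpha> :: real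
  assumes "0 < xs" "xs < 1" "0 < d"
    and "concave_on {0..1} g" "mono_on {0..1} g" "g 0 = 0"
    and "1 < \<alpha>"
    and "\<exists>s. 0 < s \<and> assumption1 g xs \<alpha> s"
    and "\<exists>s. assumption2 g xs \<alpha> s"
  shows "\<exists>K1 K2 (c0::nat). 0 < K1 \<and> K1 \<le> K2 \<and>
     (\<forall>c\<ge>c0. let lam = real c / (xs * d) in
        \<exists>xTP. policy c xTP \<and> two_price_policy c xTP \<and>
          K1 * real c powr (1 / (\<alpha> + 1))
            \<le> lam * g xs - (SUP x\<in>{x. policy c x}. avg_reward c lam d g x) \<and>
          lam * g xs - (SUP x\<in>{x. policy c x}. avg_reward c lam d g x)
            \<le> lam * g xs - avg_reward c lam d g xTP \<and>
          lam * g xs - avg_reward c lam d g xTP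
            \<le> K2 * real c powr (1 / (\<alpha> + 1)) * (ln (real c))\<^sup>2)"
proof -
  note xs = assms(1,2) and d = assms(3) and conc = assms(4) and g0 = assms(6) and al = assms(7)
  obtain s1 where s1: "0 < s1" "assumption1 g xs \<alpha> s1" using assms(8) by blast
  then obtain \<epsilon>1 k1 where sg1: "supergradient g xs s1" and e1: "0 < \<epsilon>1" "\<epsilon>1 < min xs (1 - xs)"
    and k1: "0 \<le> k1"
    and A1: "\<forall>x\<in>{xs - \<epsilon>1..xs + \<epsilon>1}. g x \<ge> g xs + s1 * (x - xs) - k1 * \<bar>x - xs\<bar> powr \<alpha>"
    unfolding assumption1_def by blast
  obtain s2 where "assumption2 g xs \<alpha> s2" using assms(9) by blast
  then obtain \<epsilon>2 k2 where sg2: "supergradient g xs s2" and e2: "0 < \<epsilon>2" "\<epsilon>2 < min xs (1 - xs)"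
    and k2: "0 < k2"
    and A2: "\<forall>x\<in>{xs - \<epsilon>2..xs + \<epsilon>2}. g x \<le> g xs + s2 * (x - xs) - k2 * \<bar>x - xs\<bar> powr \<alpha>"
    unfolding assumption2_def by blast
  have s12: "s1 = s2" by (rule s_eq[OF e1 k1 A1 sg2 al])
  define k where "k = k2 * \<epsilon>2 powr (\<alpha> - 1)"
  have k0: "0 < k" using k2 e2 by (simp add: k_def)
  have hgr: "\<forall>y\<in>{0..1}. g xs + s1 * (y - xs) - g y \<ge> k * \<bar>y - xs\<bar> powr \<alpha>"
  proof
    fix y :: real assume y: "y \<in> {0..1}"
    show "g xs + s1 * (y - xs) - g y \<ge> k * \<bar>y - xs\<bar> powr \<alpha>"
      unfolding k_def by (rule hgrowth[OF conc e2 k2 A2[folded s12] _ y]) (use al in simp)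
  qed
  obtain c0 :: nat where c0: "\<And>c. c0 \<le> c \<Longrightarrow> 3 \<le> c \<and> 1 \<le> real c powr (1 / (\<alpha> + 1)) \<and>
     (real c powr (1 / (\<alpha> + 1))) powr (\<alpha> + 1) = real c \<and> 1 / real c powr (1 / (\<alpha> + 1)) \<le> \<epsilon>1 \<and>
     12 * (real c powr (1 / (\<alpha> + 1)))\<^sup>2 \<le> real c \<and>
     4 * xs\<^sup>2 * (real c powr (1 / (\<alpha> + 1)))\<^sup>2 * ln (real c) \<le> real c \<and>
     2 * xs * real c powr (1 / (\<alpha> + 1)) * ln (real c) + 1 \<le> real c"
    using conds[OF al e1(1) xs] by blast
  define K1 where "K1 = min (s1 / d) (k * (xs / 24) powr \<alpha> / (xs * d))"
  define K2' where "K2' = (g xs - s1 * xs) / (xs * d) + s1 / d * (3 * xs + 1) + k1 / (xs * d)"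
  define K2 where "K2 = max K1 K2'"
  have K1p: "0 < K1" unfolding K1_def using s1 d k0 xs by simp
  have K12: "K1 \<le> K2" unfolding K2_def by simp
  show ?thesis
  proof (rule exI[of _ K1], rule exI[of _ K2], rule exI[of _ c0], intro conjI K1p K12 allI impI)
    fix c :: nat assume cc: "c0 \<le> c"
    define T where "T = real c powr (1 / (\<alpha> + 1))"
    define lam where "lam = real c / (xs * d)"
    have C: "3 \<le> c" "1 \<le> T" "T powr (\<alpha> + 1) = real c" "1 / T \<le> \<epsilon>1" "12 * T\<^sup>2 \<le> real c"
       "4 * xs\<^sup>2 * T\<^sup>2 * ln (real c) \<le> real c" "2 * xs * T * ln (real c) + 1 \<le> real c"
      using c0[OF cc] unfolding T_def by auto
    have cpos: "0 < c" using C(1) by simp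
    have lam0: "0 < lam" using cpos xs d by (simp add: lam_def)
    obtain xTP where tp: "policy c xTP" "two_price_policy c xTP"
      "lam * g xs - avg_reward c lam d g xTP \<le> K2' * T * (ln (real c))\<^sup>2"
      using upper_one[OF lam_def xs d C(1) _ sg1 g0 e1 k1 A1 al C(2-4,6-7)] s1 unfolding K2'_def by auto
    have low: "avg_reward c lam d g x \<le> lam * g xs - K1 * T" if pol: "policy c x" for x
    proof -
      have ss: "is_steady_state c lam d x (steady_state c lam d x)" by (rule ss_is[OF lam0 d pol])
      have "K1 * T \<le> lam * g xs - (\<Sum>j=1..c. steady_state c lam d x j * lam * g (x j))"
        unfolding K1_def by (rule lower_one[OF ss lam_def xs(1) d cpos pol s1(1) sg1 g0 hgr k0 al C(2,3,5)])
      then show ?thesis unfolding avg_reward_def by simp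
    qed
    have ne: "{x. policy c x} \<noteq> {}" using tp(1) by auto
    have bdd: "bdd_above (avg_reward c lam d g ` {x. policy c x})"
      using low by (intro bdd_aboveI2[of _ _ "lam * g xs - K1 * T"]) auto
    have S1: "(SUP x\<in>{x. policy c x}. avg_reward c lam d g x) \<le> lam * g xs - K1 * T"
      using ne low by (intro cSUP_least) auto
    have S2: "avg_reward c lam d g xTP \<le> (SUP x\<in>{x. policy c x}. avg_reward c lam d g x)"
      using bdd tp(1) by (intro cSUP_upper) auto
    have Q0: "0 \<le> T * (ln (real c))\<^sup>2" using C(2) by simp
    have "K2' * T * (ln (real c))\<^sup>2 \<le> K2 * T * (ln (real c))\<^sup>2"
      using Q0 unfolding K2_def by (simp add: mult.assoc mult_right_mono)
    then show "let lam = real c / (xs * d) in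
        \<exists>xTP. policy c xTP \<and> two_price_policy c xTP \<and>
          K1 * real c powr (1 / (\<alpha> + 1))
            \<le> lam * g xs - (SUP x\<in>{x. policy c x}. avg_reward c lam d g x) \<and>
          lam * g xs - (SUP x\<in>{x. policy c x}. avg_reward c lam d g x)
            \<le> lam * g xs - avg_reward c lam d g xTP \<and>
          lam * g xs - avg_reward c lam d g xTP
            \<le> K2 * real c powr (1 / (\<alpha> + 1)) * (ln (real c))\<^sup>2"
      unfolding Let_def lam_def[symmetric] T_def[symmetric]
      using tp S1 S2 by (intro exI[of _ xTP]) auto
  qed
qed


end
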